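(* Let $\ell,s$ be positive integers with $s\le\ell$, and let $\Omega_{s,\mathbf{i}}$ ($\mathbf{i}\in\mathbb{Z}_{\ge0}^h$, $|\mathbf{i}|\le s$) be the unique elements of $\mathcal{R}$ with $\deg_{\mathcal{H}}\Omega_{s,\mathbf{i}}\le\deg_{\mathcal{H}}\Lambda_s+|\mathbf{i}|(2g-1)$ and $\Lambda_s(\mathbf{f}-\mathbf{R})^{\mathbf{i}}=G^{|\mathbf{i}|}\Omega_{s,\mathbf{i}}$. Then for all $\mathbf{j}\in\mathbb{Z}_{\ge0}^h$ with $1\le|\mathbf{j}|\le\ell$: $$\Lambda_s\mathbf{f}^{\mathbf{j}}=\sum_{\mathbf{i}\preceq\mathbf{j}}\Omega_{s,\mathbf{i}}\binom{\mathbf{j}}{\mathbf{i}}\mathbf{R}^{\mathbf{j}-\mathbf{i}}G^{|\mathbf{i}|}\quad\text{if } 1\le|\mathbf{j}|<s,$$ $$\Lambda_s\mathbf{f}^{\mathbf{j}}\equiv\sum_{\mathbf{i}\preceq\mathbf{j},\ |\mathbf{i}|<s}\Omega_{s,\mathbf{i}}\binom{\mathbf{j}}{\mathbf{i}}\mathbf{R}^{\mathbf{j}-\mathbf{i}}G^{|\mathbf{i}|}\mod G^s\quad\text{if } s\le|\mathbf{j}|\le\ell,$$ as congruences over $\mathcal{R}$.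
   Context: Let $q$ be a prime power. The Hermitian curve over $\mathbb{F}_{q^2}$ is the smooth projective plane curve with affine equation $Y^q+Y=X^{q+1}$; it has genus $g=\tfrac12 q(q-1)$, $n=q^3$ affine rational points $P_1,\dots,P_n$ and the point at infinity $P_\infty$. Let $\mathcal{R}=\bigcup_{m\ge0}\mathcal{L}(mP_\infty)=\mathbb{F}_{q^2}[X,Y]/(Y^q+Y-X^{q+1})$ with basis $\{X^iY^j: i\ge0,0\le j<q\}$; $\deg_{\mathcal{H}} f=-v_{P_\infty}(f)$ ($v_P$ the valuation at $P$), so $\deg_{\mathcal{H}}(X^iY^j)=iq+j(q+1)$; $f\ne0$ is monic if the coefficient of its basis monomial of largest $\deg_{\mathcal{H}}$ is $1$. Fix integers $h\ge1$ and $m_{\mathrm H}$ with $2(g-1)<m_{\mathrm H}<n$. Let $\mathbf{f}=(f_1,\dots,f_h)\in\mathcal{L}(m_{\mathrm H}P_\infty)^h$ and $\mathbf{r}=\mathbf{c}+\mathbf{e}\in\mathbb{F}_{q^2}^{h\times n}$ where $\mathbf{c}$ has $i$-th row $(f_i(P_1),\dots,f_i(P_n))$; $\mathcal{E}\subseteq\{1,\dots,n\}$ is the set of indices of nonzero columns of $\mathbf{e}$. $\Lambda_s$ is the unique monic element of minimal $\deg_{\mathcal{H}}$ of $\{\Lambda\in\mathcal{R}:v_{P_i}(\Lambda)\ge s\ \forall i\in\mathcal{E}\}$. $\mathbf{R}=(R_1,\dots,R_h)\in\mathcal{R}^h$ with $\deg_{\mathcal{H}}R_i<n+2g$ and $R_i(P_j)=r_{i,j}$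 for all $i,j$; $G=X^{q^2}-X$. For $\mathbf{i},\mathbf{j}\in\mathbb{Z}_{\ge0}^h$: $|\mathbf{i}|=\sum_\mu i_\mu$; $\mathbf{i}\preceq\mathbf{j}$ iff $i_\mu\le j_\mu$ for all $\mu$; $\mathbf{a}^{\mathbf{i}}=\prod_\mu a_\mu^{i_\mu}$ for $\mathbf{a}\in\mathcal{R}^h$; $\binom{\mathbf{j}}{\mathbf{i}}=\prod_\mu\binom{j_\mu}{i_\mu}$. *)

theory Defs
  imports "HOL-Computational_Algebra.Polynomial" "HOL-Computational_Algebra.Primes" "HOL-Library.Cardinality"
begin

text \<open>Elements of the coordinate ring R = F[X,Y]/(Y^q+Y-X^(q+1)) are represented by
  polynomials of type 'a poly poly: the outer variable is Y, the inner variable is X.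
  Equality in R is congruence modulo the curve polynomial H.\<close>

definition HX :: "'a::comm_ring_1 poly poly" where
  "HX = [: [:0, 1:] :]"

definition HY :: "'a::comm_ring_1 poly poly" where
  "HY = [:0, 1:]"

definition HC :: "'a::comm_ring_1 \<Rightarrow> 'a poly poly" where
  "HC c = [: [:c:] :]"

definition hcurve :: "nat \<Rightarrow> 'a::comm_ring_1 poly poly" where
  "hcurve q = HY ^ q + HY - HX ^ (q + 1)"

definition Gpoly :: "nat \<Rightarrow> 'a::comm_ring_1 poly poly" where
  "Gpoly q = HX ^ (q^2) - HX"

definition eqR :: "nat \<Rightarrow> 'a::comm_ring_1 poly poly \<Rightarrow> 'a poly poly \<Rightarrow> bool" where
  "eqR q f g \<longleftrightarrow> hcurve q dvd (f - g)"

definition congR :: "nat \<Rightarrow> 'a::comm_ring_1 poly poly \<Rightarrow> 'a poly poly \<Rightarrow> 'a poly poly \<Rightarrow> bool" where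
  "congR q f g M \<longleftrightarrow> (\<exists>a b. f - g = M * a + hcurve q * b)"

definition redR :: "nat \<Rightarrow> 'a::comm_ring_1 poly poly \<Rightarrow> 'a poly poly" where
  "redR q f = (THE r. degree r < q \<and> eqR q f r)"

definition coeffR :: "nat \<Rightarrow> 'a::comm_ring_1 poly poly \<Rightarrow> nat \<Rightarrow> nat \<Rightarrow> 'a" where
  "coeffR q f i j = coeff (coeff (redR q f) j) i"

definition hweight :: "nat \<Rightarrow> nat \<Rightarrow> nat \<Rightarrow> nat" where
  "hweight q i j = i * q + j * (q + 1)"

definition degH :: "nat \<Rightarrow> 'a::comm_ring_1 poly poly \<Rightarrow> nat" where
  "degH q f = Max {hweight q i j | i j. j < q \<and> coeffR q f i j \<noteq> 0}"

text \<open>deg_H f \<le> m (true for f = 0, whose degree is -infinity), i.e. f \<in> L(m P_inf).\<close>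
definition degH_le :: "nat \<Rightarrow> int \<Rightarrow> 'a::comm_ring_1 poly poly \<Rightarrow> bool" where
  "degH_le q m f \<longleftrightarrow> (\<forall>i j. j < q \<longrightarrow> coeffR q f i j \<noteq> 0 \<longrightarrow> int (hweight q i j) \<le> m)"

definition degH_lt :: "nat \<Rightarrow> int \<Rightarrow> 'a::comm_ring_1 poly poly \<Rightarrow> bool" where
  "degH_lt q m f \<longleftrightarrow> (\<forall>i j. j < q \<longrightarrow> coeffR q f i j \<noteq> 0 \<longrightarrow> int (hweight q i j) < m)"

definition monicR :: "nat \<Rightarrow> 'a::comm_ring_1 poly poly \<Rightarrow> bool" where
  "monicR q f \<longleftrightarrow> \<not> eqR q f 0 \<and>
     (\<exists>i j. j < q \<and> hweight q i j = degH q f \<and> coeffR q f i j = 1)"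

definition evalR :: "'a::comm_ring_1 poly poly \<Rightarrow> 'a \<times> 'a \<Rightarrow> 'a" where
  "evalR f P = poly (map_poly (\<lambda>p. poly p (fst P)) f) (snd P)"

definition hpoints :: "nat \<Rightarrow> ('a::comm_ring_1 \<times> 'a) set" where
  "hpoints q = {(a, b). b ^ q + b = a ^ (q + 1)}"

text \<open>v_P(f) \<ge> s for an affine point P = (a,b): f lies in m_P^s O_P, where O_P is the local
  ring at P and m_P = (X-a, Y-b) its maximal ideal (O_P is a DVR, so this is v_P(f) \<ge> s).\<close>
definition val_ge :: "nat \<Rightarrow> 'a::comm_ring_1 \<times> 'a \<Rightarrow> nat \<Rightarrow> 'a poly poly \<Rightarrow> bool" where
  "val_ge q P s f \<longleftrightarrow> (\<exists>u c d. evalR u P \<noteq> 0 \<and>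
     u * f = (\<Sum>k\<le>s. (HX - HC (fst P)) ^ k * (HY - HC (snd P)) ^ (s - k) * c k) + hcurve q * d)"

text \<open>Multi-indices in Z_{\<ge>0}^h: functions nat \<Rightarrow> nat vanishing from h on.\<close>
definition mindex :: "nat \<Rightarrow> (nat \<Rightarrow> nat) \<Rightarrow> bool" where
  "mindex h i \<longleftrightarrow> (\<forall>\<mu>\<ge>h. i \<mu> = 0)"

definition mabs :: "nat \<Rightarrow> (nat \<Rightarrow> nat) \<Rightarrow> nat" where
  "mabs h i = (\<Sum>\<mu><h. i \<mu>)"

definition mle :: "nat \<Rightarrow> (nat \<Rightarrow> nat) \<Rightarrow> (nat \<Rightarrow> nat) \<Rightarrow> bool" where
  "mle h i j \<longleftrightarrow> mindex h i \<and> (\<forall>\<mu><h. i \<mu> \<le> j \<mu>)"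

definition mpow :: "nat \<Rightarrow> (nat \<Rightarrow> 'a::comm_ring_1) \<Rightarrow> (nat \<Rightarrow> nat) \<Rightarrow> 'a" where
  "mpow h a i = (\<Prod>\<mu><h. a \<mu> ^ i \<mu>)"

definition mbinom :: "nat \<Rightarrow> (nat \<Rightarrow> nat) \<Rightarrow> (nat \<Rightarrow> nat) \<Rightarrow> nat" where
  "mbinom h j i = (\<Prod>\<mu><h. j \<mu> choose i \<mu>)"

definition prime_power :: "nat \<Rightarrow> bool" where
  "prime_power q \<longleftrightarrow> (\<exists>p k. prime p \<and> k > 0 \<and> q = p ^ k)"

end

theory Submission imports Defs "HOL-Library.FuncSet" begin

definition extm :: "nat \<Rightarrow> (nat \<Rightarrow> nat) \<Rightarrow> nat \<Rightarrow> nat" where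
  "extm h p = (\<lambda>\<mu>. if \<mu> < h then p \<mu> else 0)"

lemma bij_extm: "bij_betw (extm h) (PiE {..<h} (\<lambda>\<mu>. {..j \<mu>})) {i. mle h i j}"
proof (rule bij_betwI[where g="\<lambda>i. restrict i {..<h}"])
  show "extm h \<in> (PiE {..<h} (\<lambda>\<mu>. {..j \<mu>})) \<rightarrow> {i. mle h i j}"
    by (auto simp: extm_def mle_def mindex_def PiE_def)
  show "(\<lambda>i. restrict i {..<h}) \<in> {i. mle h i j} \<rightarrow> (PiE {..<h} (\<lambda>\<mu>. {..j \<mu>}))"
    by (auto simp: mle_def)
  show "\<And>x. x \<in> Pi\<^sub>E {..<h} (\<lambda>\<mu>. {..j \<mu>}) \<Longrightarrow> restrict (extm h x) {..<h} = x"
    by (auto simp: extm_def PiE_def extensional_def restrict_def)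
  show "\<And>y. y \<in> {i. mle h i j} \<Longrightarrow> extm h (restrict y {..<h}) = y"
    by (auto simp: extm_def mle_def mindex_def fun_eq_iff)
qed

lemma finite_mle: "finite {i. mle h i j}"
proof -
  have "{i. mle h i j} = extm h ` (PiE {..<h} (\<lambda>\<mu>. {..j \<mu>}))"
    using bij_extm[of h j] by (simp add: bij_betw_def)
  thus ?thesis by (simp add: finite_PiE)
qed

lemma multi_binomial:
  fixes a b :: "nat \<Rightarrow> 'a::comm_ring_1"
  shows "mpow h (\<lambda>\<mu>. a \<mu> + b \<mu>) j =
    (\<Sum>i\<in>{i. mle h i j}. of_nat (mbinom h j i) * mpow h a i * mpow h b (\<lambda>\<mu>. j \<mu> - i \<mu>))"
proof -
  have "mpow h (\<lambda>\<mu>. a \<mu> + b \<mu>) j =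
     (\<Prod>\<mu><h. \<Sum>k\<le>j \<mu>. of_nat (j \<mu> choose k) * a \<mu> ^ k * b \<mu> ^ (j \<mu> - k))"
    unfolding mpow_def by (simp add: binomial_ring)
  also have "\<dots> = (\<Sum>p\<in>PiE {..<h} (\<lambda>\<mu>. {..j \<mu>}).
       \<Prod>\<mu><h. of_nat (j \<mu> choose p \<mu>) * a \<mu> ^ p \<mu> * b \<mu> ^ (j \<mu> - p \<mu>))"
    by (rule prod_sum_PiE) auto
  also have "\<dots> = (\<Sum>p\<in>PiE {..<h} (\<lambda>\<mu>. {..j \<mu>}).
       (\<lambda>i. of_nat (mbinom h j i) * mpow h a i * mpow h b (\<lambda>\<mu>. j \<mu> - i \<mu>)) (extm h p))"
  proof (rule sum.cong[OF refl])
    fix p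
    show "(\<Prod>\<mu><h. of_nat (j \<mu> choose p \<mu>) * a \<mu> ^ p \<mu> * b \<mu> ^ (j \<mu> - p \<mu>)) =
       (\<lambda>i. of_nat (mbinom h j i) * mpow h a i * mpow h b (\<lambda>\<mu>. j \<mu> - i \<mu>)) (extm h p)"
      unfolding mbinom_def mpow_def of_nat_prod prod.distrib[symmetric]
      by (rule prod.cong) (auto simp: extm_def)
  qed
  also have "\<dots> = (\<Sum>i\<in>{i. mle h i j}. of_nat (mbinom h j i) * mpow h a i * mpow h b (\<lambda>\<mu>. j \<mu> - i \<mu>))"
    by (rule sum.reindex_bij_betw[OF bij_extm])
  finally show ?thesis .
qed

lemma sub_index:
  "s \<le> mabs h i \<Longrightarrow> \<exists>i'. mindex h i' \<and> (\<forall>\<mu><h. i' \<mu> \<le> i \<mu>) \<and> mabs h i' = s"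
proof (induction h)
  case 0
  then show ?case by (auto simp: mabs_def mindex_def intro!: exI[of _ "\<lambda>_. 0"])
next
  case (Suc h)
  show ?case
  proof (cases "s \<le> mabs h i")
    case True
    then obtain i' where i': "mindex h i'" "\<forall>\<mu><h. i' \<mu> \<le> i \<mu>" "mabs h i' = s" using Suc by blast
    have "i' h = 0" using i'(1) by (simp add: mindex_def)
    then show ?thesis using i' by (intro exI[of _ i']) (auto simp: mindex_def mabs_def less_Suc_eq)
  next
    case False
    define i' where "i' = (\<lambda>\<mu>. if \<mu> < h then i \<mu> else if \<mu> = h then s - mabs h i else 0)"
    have "mabs h i' = mabs h i" unfolding mabs_def i'_def by (rule sum.cong) auto
    moreover have "mabs (Suc h) i = mabs h i + i h" by (simp add: mabs_def)
    ultimately show ?thesis using False Suc.prems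
      by (intro exI[of _ i']) (auto simp: mindex_def mabs_def i'_def less_Suc_eq)
  qed
qed

lemma mpow_split:
  assumes "\<forall>\<mu><h. i' \<mu> \<le> i \<mu>"
  shows "mpow h a i = mpow h a i' * mpow h a (\<lambda>\<mu>. i \<mu> - i' \<mu>)"
  unfolding mpow_def prod.distrib[symmetric]
  by (rule prod.cong) (auto simp: power_add[symmetric] assms)

lemma sum_ideal:
  assumes "finite A" "\<forall>x\<in>A. \<exists>a b. F x = (M::'b::comm_ring_1) * a + N * b"
  shows "\<exists>a b. sum F A = M * a + N * b"
  using assms
proof (induction A rule: finite_induct)
  case empty
  then show ?case by (auto intro!: exI[of _ 0])
next
  case (insert x A)
  then obtain a b where ab: "sum F A = M * a + N * b" by auto
  obtain c d where cd: "F x = M * c + N * d" using insert by auto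
  show ?case using insert ab cd by (intro exI[of _ "a + c"] exI[of _ "b + d"]) (simp add: algebra_simps)
qed

lemma mabs_mono: "\<forall>\<mu><h. i \<mu> \<le> j \<mu> \<Longrightarrow> mabs h i \<le> mabs h j"
  unfolding mabs_def by (rule sum_mono) auto


theorem theorem2:
  fixes q h mH l s :: nat
    and f :: "nat \<Rightarrow> ('a::{field,finite}) poly poly"
    and e :: "nat \<Rightarrow> 'a \<times> 'a \<Rightarrow> 'a"
    and R :: "nat \<Rightarrow> 'a poly poly"
    and Lam :: "'a poly poly"
    and Om :: "(nat \<Rightarrow> nat) \<Rightarrow> 'a poly poly"
  defines "n \<equiv> q ^ 3"
    and "g \<equiv> q * (q - 1) div 2"
    and "r \<equiv> (\<lambda>\<mu> P. evalR (f \<mu>) P + e \<mu> P)"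
    and "E \<equiv> {P \<in> hpoints q. \<exists>\<mu><h. e \<mu> P \<noteq> 0}"
  assumes q: "prime_power q"
    and card: "CARD('a) = q ^ 2"
    and h: "h \<ge> 1"
    and mH: "2 * (int g - 1) < int mH" "mH < n"
    and f: "\<forall>\<mu><h. degH_le q (int mH) (f \<mu>)"
    and Lam_in: "\<forall>P\<in>E. val_ge q P s Lam"
    and Lam_monic: "monicR q Lam"
    and Lam_min: "\<forall>L. (\<forall>P\<in>E. val_ge q P s L) \<longrightarrow> \<not> eqR q L 0 \<longrightarrow> degH q Lam \<le> degH q L"
    and R: "\<forall>\<mu><h. degH_lt q (int (n + 2 * g)) (R \<mu>) \<and> (\<forall>P\<in>hpoints q. evalR (R \<mu>) P = r \<mu> P)"
    and ls: "1 \<le> s" "s \<le> l"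
    and Om: "\<forall>i. mindex h i \<longrightarrow> mabs h i \<le> s \<longrightarrow>
               degH_le q (int (degH q Lam) + int (mabs h i) * (2 * int g - 1)) (Om i) \<and>
               eqR q (Lam * mpow h (\<lambda>\<mu>. f \<mu> - R \<mu>) i) (Gpoly q ^ mabs h i * Om i)"
  shows "\<forall>j. mindex h j \<longrightarrow> 1 \<le> mabs h j \<longrightarrow> mabs h j \<le> l \<longrightarrow>
           (mabs h j < s \<longrightarrow>
              eqR q (Lam * mpow h f j)
                (\<Sum>i\<in>{i. mle h i j}. Om i * of_nat (mbinom h j i) * mpow h R (\<lambda>\<mu>. j \<mu> - i \<mu>)
                    * Gpoly q ^ mabs h i)) \<and>
           (s \<le> mabs h j \<longrightarrow>
              congR q (Lam * mpow h f j)
                (\<Sum>i\<in>{i. mle h i j \<and> mabs h i < s}. Om i * of_nat (mbinom h j i)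
                    * mpow h R (\<lambda>\<mu>. j \<mu> - i \<mu>) * Gpoly q ^ mabs h i)
                (Gpoly q ^ s))"

proof (intro allI impI)
  fix j assume j: "mindex h j" "1 \<le> mabs h j" "mabs h j \<le> l"
  define F where "F = (\<lambda>\<mu>. f \<mu> - R \<mu>)"
  define X where "X = (\<lambda>i. Lam * (of_nat (mbinom h j i) * mpow h F i * mpow h R (\<lambda>\<mu>. j \<mu> - i \<mu>)))"
  define Y where "Y = (\<lambda>i. Om i * of_nat (mbinom h j i) * mpow h R (\<lambda>\<mu>. j \<mu> - i \<mu>) * Gpoly q ^ mabs h i)"
  have fF: "f = (\<lambda>\<mu>. F \<mu> + R \<mu>)" by (simp add: F_def)
  have exp: "Lam * mpow h f j = (\<Sum>i\<in>{i. mle h i j}. X i)"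
    unfolding X_def sum_distrib_left[symmetric] by (subst fF, rule arg_cong[OF multi_binomial])
  have OmE: "\<And>i. mindex h i \<Longrightarrow> mabs h i \<le> s \<Longrightarrow>
       \<exists>c. Lam * mpow h F i - Gpoly q ^ mabs h i * Om i = hcurve q * c"
    using Om unfolding F_def eqR_def dvd_def by blast
  have XY: "\<And>i. mle h i j \<Longrightarrow> mabs h i \<le> s \<Longrightarrow> \<exists>c. X i - Y i = hcurve q * c"
  proof -
    fix i assume i: "mle h i j" "mabs h i \<le> s"
    then obtain c where c: "Lam * mpow h F i - Gpoly q ^ mabs h i * Om i = hcurve q * c"
      using OmE unfolding mle_def by blast
    have "X i - Y i = of_nat (mbinom h j i) * mpow h R (\<lambda>\<mu>. j \<mu> - i \<mu>) *
         (Lam * mpow h F i - Gpoly q ^ mabs h i * Om i)"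
      unfolding X_def Y_def by (simp add: algebra_simps)
    also have "\<dots> = hcurve q * (of_nat (mbinom h j i) * mpow h R (\<lambda>\<mu>. j \<mu> - i \<mu>) * c)"
      using c by (simp add: algebra_simps)
    finally show "\<exists>c. X i - Y i = hcurve q * c" by blast
  qed
  show "(mabs h j < s \<longrightarrow> eqR q (Lam * mpow h f j) (\<Sum>i\<in>{i. mle h i j}. Y i)) \<and>
        (s \<le> mabs h j \<longrightarrow> congR q (Lam * mpow h f j) (\<Sum>i\<in>{i. mle h i j \<and> mabs h i < s}. Y i) (Gpoly q ^ s))"
  proof (intro conjI impI)
    assume js: "mabs h j < s"
    have "Lam * mpow h f j - (\<Sum>i\<in>{i. mle h i j}. Y i) = (\<Sum>i\<in>{i. mle h i j}. X i - Y i)"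
      by (simp add: exp sum_subtractf)
    moreover have "hcurve q dvd (\<Sum>i\<in>{i. mle h i j}. X i - Y i)"
    proof (rule dvd_sum)
      fix i assume "i \<in> {i. mle h i j}"
      hence "mle h i j" "mabs h i \<le> s" using mabs_mono[of h i j] js by (auto simp: mle_def)
      thus "hcurve q dvd X i - Y i" using XY unfolding dvd_def by metis
    qed
    ultimately show "eqR q (Lam * mpow h f j) (\<Sum>i\<in>{i. mle h i j}. Y i)"
      by (simp add: eqR_def)
  next
    assume js: "s \<le> mabs h j"
    have set: "{i. mle h i j \<and> mabs h i < s} = {i \<in> {i. mle h i j}. mabs h i < s}" by auto
    have "Lam * mpow h f j - (\<Sum>i\<in>{i. mle h i j \<and> mabs h i < s}. Y i) =
       (\<Sum>i\<in>{i. mle h i j}. X i - (if mabs h i < s then Y i else 0))"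
      unfolding set sum.inter_filter[OF finite_mle] by (simp add: exp sum_subtractf)
    moreover have "\<exists>a b. (\<Sum>i\<in>{i. mle h i j}. X i - (if mabs h i < s then Y i else 0))
        = Gpoly q ^ s * a + hcurve q * b"
    proof (rule sum_ideal[OF finite_mle], intro ballI)
      fix i assume "i \<in> {i. mle h i j}"
      hence i: "mle h i j" by simp
      show "\<exists>a b. X i - (if mabs h i < s then Y i else 0) = Gpoly q ^ s * a + hcurve q * b"
      proof (cases "mabs h i < s")
        case True
        then obtain c where "X i - Y i = hcurve q * c" using XY i by fastforce
        thus ?thesis using True by (intro exI[of _ 0] exI[of _ c]) simp
      next
        case False
        then obtain i' where i': "mindex h i'" "\<forall>\<mu><h. i' \<mu> \<le> i \<mu>" "mabs h i' = s"
          using sub_index[of s h i] by auto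
        then obtain c where c: "Lam * mpow h F i' - Gpoly q ^ s * Om i' = hcurve q * c"
          using OmE[of i'] by auto
        define T where "T = of_nat (mbinom h j i) * mpow h R (\<lambda>\<mu>. j \<mu> - i \<mu>) * mpow h F (\<lambda>\<mu>. i \<mu> - i' \<mu>)"
        have "X i = T * (Lam * mpow h F i')"
          unfolding X_def T_def using mpow_split[OF i'(2), of F] by (simp add: algebra_simps)
        also have "Lam * mpow h F i' = Gpoly q ^ s * Om i' + hcurve q * c"
          using c by (simp add: algebra_simps)
        finally have "X i = Gpoly q ^ s * (T * Om i') + hcurve q * (T * c)"
          by (simp add: algebra_simps)
        thus ?thesis using False by auto
      qed
    qed
    ultimately show "congR q (Lam * mpow h f j) (\<Sum>i\<in>{i. mle h i j \<and> mabs h i < s}. Y i) (Gpoly q ^ s)"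
      unfolding congR_def by metis
  qed
qed

end
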